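(* Let $Y\sim$ exGPD$(\sigma,\xi)$ with $\sigma>0$, and let $\psi'$ denote the trigamma function. Then $\mathrm{Var}[Y]=\psi'(1)-\psi'(1-1/\xi)=\frac{\pi^2}{6}-\sum_{k=1}^{\infty}\frac{1}{(k-1/\xi)^2}$ if $\xi<0$; $\mathrm{Var}[Y]=\psi'(1)+\psi'(1/\xi)=\frac{\pi^2}{6}+\sum_{k=1}^{\infty}\frac{1}{(k+1/\xi-1)^2}$ if $\xi>0$; $\mathrm{Var}[Y]=\psi'(1)=\frac{\pi^2}{6}$ if $\xi=0$. In particular, $\mathrm{Var}[Y]$ depends only on $\xi$, and $\mathrm{Var}[Y]>\pi^2/6$, $=\pi^2/6$, or $<\pi^2/6$ according as $\xi>0$, $\xi=0$, or $\xi<0$.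
   Context: For $\sigma>0$ and $\xi\in\mathbb{R}$, the generalized Pareto distribution GPD$(\sigma,\xi)$ has distribution function $G(x)=1-(1+\xi x/\sigma)^{-1/\xi}$ for $\xi\neq 0$, with support $x\ge 0$ if $\xi>0$ and $0\le x\le -\sigma/\xi$ if $\xi<0$; for $\xi=0$ it is $G(x)=1-e^{-x/\sigma}$, $x\ge 0$. A random variable $Y$ has the exponentiated generalized Pareto distribution exGPD$(\sigma,\xi)$ if $Y=\log X$ with $X\sim$ GPD$(\sigma,\xi)$. Equivalently, for $\xi\neq0$ its distribution function is $F_Y(y)=1-(1+\xi e^y/\sigma)^{-1/\xi}$, with support $y\in\mathbb{R}$ if $\xi>0$ and $-\infty<y\le \log(-\sigma/\xi)$ if $\xi<0$. For $\xi=0$ it is $F_Y(y)=1-\exp(-e^{y}/\sigma)$, $y\in\mathbb{R}$. Its density is $f_Y(y)=\frac{e^y}{\sigma}(1+\xi e^y/\sigma)^{-1/\xi-1}$ on the support for $\xi\neq0$, and $f_Y(y)=\frac{1}{\sigma}e^{y-e^y/\sigma}$ for $\xi=0$. We write $\bar F_Y=1-F_Y$. *)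

theory Defs
  imports "HOL-Probability.Probability"
begin

definition trigamma :: "real \<Rightarrow> real" where
  "trigamma x = Polygamma 1 x"

text \<open>Lebesgue density of exGPD(sigma, xi) on the real line (0 off the support).
  For xi < 0 the support endpoint y = log(-sigma/xi) is a null set, so using strict
  positivity of the base is immaterial.\<close>
definition exgpd_density :: "real \<Rightarrow> real \<Rightarrow> real \<Rightarrow> real" where
  "exgpd_density \<sigma> \<xi> y =
     (if \<xi> = 0 then exp (y - exp y / \<sigma>) / \<sigma>
      else if 1 + \<xi> * exp y / \<sigma> > 0
           then exp y / \<sigma> * (1 + \<xi> * exp y / \<sigma>) powr (- 1 / \<xi> - 1)
           else 0)"

end

theory Submission
  imports Defs
begin

lemma deriv_integral:
  fixes F F' :: "real \<Rightarrow> 'b \<Rightarrow> real" and H :: "'b \<Rightarrow> real"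
  assumes ab: "a < s0" "s0 < b"
    and intF: "\<And>s. s \<in> {a<..<b} \<Longrightarrow> integrable M (F s)"
    and der: "\<And>s x. s \<in> {a<..<b} \<Longrightarrow> x \<in> space M \<Longrightarrow> ((\<lambda>s. F s x) has_real_derivative F' s x) (at s)"
    and meas: "F' s0 \<in> borel_measurable M"
    and intH: "integrable M H"
    and bnd: "\<And>s x. s \<in> {a<..<b} \<Longrightarrow> x \<in> space M \<Longrightarrow> \<bar>F' s x\<bar> \<le> H x"
  shows "((\<lambda>s. \<integral>x. F s x \<partial>M) has_real_derivative (\<integral>x. F' s0 x \<partial>M)) (at s0)"
  unfolding DERIV_def tendsto_at_iff_sequentially
proof (intro allI impI)
  fix X :: "nat \<Rightarrow> real"
  assume X0: "\<forall>i. X i \<in> UNIV - {0}" and Xl: "X \<longlonglongrightarrow> 0"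
  define ok where "ok i \<longleftrightarrow> s0 + X i \<in> {a<..<b}" for i
  define S where "S i x = (if ok i then (F (s0 + X i) x - F s0 x) / X i else 0)" for i x
  have s0in: "s0 \<in> {a<..<b}" using ab by auto
  have evok: "eventually ok sequentially"
  proof -
    have "(\<lambda>i. s0 + X i) \<longlonglongrightarrow> s0 + 0" by (intro tendsto_intros Xl)
    then have l: "(\<lambda>i. s0 + X i) \<longlonglongrightarrow> s0" by simp
    have "eventually (\<lambda>i. a < s0 + X i) sequentially" using order_tendstoD(1)[OF l] ab by auto
    moreover have "eventually (\<lambda>i. s0 + X i < b) sequentially" using order_tendstoD(2)[OF l] ab by auto
    ultimately show ?thesis unfolding ok_def by eventually_elim auto
  qed
  have bound: "\<bar>S i x\<bar> \<le> H x" if x: "x \<in> space M" for i x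
  proof (cases "ok i")
    case False
    then have "S i x = 0" by (simp add: S_def)
    moreover have "0 \<le> H x" using bnd[OF s0in x] by linarith
    ultimately show ?thesis by simp
  next
    case True
    have Xne: "X i \<noteq> 0" using X0 by auto
    have seg: "t \<in> {a<..<b}" if "min s0 (s0 + X i) \<le> t" "t \<le> max s0 (s0 + X i)" for t
      using that True s0in unfolding ok_def by auto
    show ?thesis
    proof (cases "X i > 0")
      case True
      from MVT2[of s0 "s0 + X i" "\<lambda>s. F s x" "\<lambda>s. F' s x"] True seg der[OF _ x]
      obtain z where z: "s0 < z" "z < s0 + X i" "F (s0 + X i) x - F s0 x = X i * F' z x"
        by fastforce
      have "z \<in> {a<..<b}" using z seg True by auto
      then show ?thesis using z bnd[OF _ x] \<open>ok i\<close> True by (simp add: S_def)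
    next
      case False
      then have neg: "X i < 0" using Xne by linarith
      from MVT2[of "s0 + X i" s0 "\<lambda>s. F s x" "\<lambda>s. F' s x"] neg seg der[OF _ x]
      obtain z where z: "s0 + X i < z" "z < s0" "F s0 x - F (s0 + X i) x = (- X i) * F' z x"
        by fastforce
      have "z \<in> {a<..<b}" using z seg neg by auto
      moreover have "(F (s0 + X i) x - F s0 x) / X i = F' z x" using z Xne
        by (simp add: field_simps)
      ultimately show ?thesis using bnd[OF _ x] \<open>ok i\<close> by (simp add: S_def)
    qed
  qed
  have lim: "(\<lambda>i. S i x) \<longlonglongrightarrow> F' s0 x" if x: "x \<in> space M" for x
  proof -
    have d: "((\<lambda>h. (F (s0 + h) x - F s0 x) / h) \<longlongrightarrow> F' s0 x) (at 0)"
      using der[OF s0in x] unfolding DERIV_def .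
    have "((\<lambda>h. (F (s0 + h) x - F s0 x) / h) \<circ> X) \<longlonglongrightarrow> F' s0 x"
      using d X0 Xl unfolding tendsto_at_iff_sequentially by auto
    then show ?thesis
      by (rule Lim_transform_eventually) (use evok in \<open>auto elim!: eventually_mono simp: S_def\<close>)
  qed
  have measS: "S i \<in> borel_measurable M" for i
  proof (cases "ok i")
    case True
    then have "integrable M (F (s0 + X i))" using intF unfolding ok_def by auto
    then show ?thesis using True intF[OF s0in] unfolding S_def by auto
  qed (simp add: S_def[abs_def])
  have conv: "(\<lambda>i. integral\<^sup>L M (S i)) \<longlonglongrightarrow> integral\<^sup>L M (F' s0)"
    by (rule integral_dominated_convergence[OF meas measS intH])
       (use lim bound in auto)
  have eq: "eventually (\<lambda>i. integral\<^sup>L M (S i) = ((\<lambda>h. ((\<integral>x. F (s0 + h) x \<partial>M) - (\<integral>x. F s0 x \<partial>M)) / h) \<circ> X) i) sequentially"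
    using evok
  proof eventually_elim
    case (elim i)
    have "integral\<^sup>L M (S i) = (\<integral>x. (F (s0 + X i) x - F s0 x) / X i \<partial>M)"
      using elim by (simp add: S_def[abs_def])
    also have "\<dots> = ((\<integral>x. F (s0 + X i) x \<partial>M) - (\<integral>x. F s0 x \<partial>M)) / X i"
      using intF[OF s0in] intF[of "s0 + X i"] elim unfolding ok_def by simp
    finally show ?case by simp
  qed
  show "((\<lambda>h. ((\<integral>x. F (s0 + h) x \<partial>M) - (\<integral>x. F s0 x \<partial>M)) / h) \<circ> X) \<longlonglongrightarrow> (\<integral>x. F' s0 x \<partial>M)"
    using Lim_transform_eventually[OF conv eq] .
qed

lemma Gamma_int_open:
  assumes "x > (0::real)"
  shows "((\<lambda>t. t powr (x - 1) / exp t) has_integral Gamma x) {0<..}"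
proof -
  have "((\<lambda>t. t powr (x - 1) / exp t) has_integral Gamma x) {0..}"
    using Gamma_integral_real[OF assms] .
  then show ?thesis
    by (rule has_integral_spike_set_eq[THEN iffD1, rotated 2])
       (auto intro: negligible_subset[of "{0}"])
qed

lemma Beta_int_open:
  assumes "a > (0::real)" "b > 0"
  shows "((\<lambda>t. t powr (a - 1) * (1 - t) powr (b - 1)) has_integral Beta a b) {0<..<1}"
proof -
  have "((\<lambda>t. t powr (a - 1) * (1 - t) powr (b - 1)) has_integral Beta a b) {0..1}"
    using has_integral_Beta_real[OF assms] .
  then show ?thesis
    by (rule has_integral_spike_set_eq[THEN iffD1, rotated 2])
       (auto intro: negligible_subset[of "{0,1}"])
qed

lemma mellin0:
  assumes \<sigma>: "\<sigma> > 0" and s: "s > -1"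
  shows "(\<lambda>y. exp (s * y) * exgpd_density \<sigma> 0 y) absolutely_integrable_on UNIV \<and>
         integral UNIV (\<lambda>y. exp (s * y) * exgpd_density \<sigma> 0 y) = \<sigma> powr s * Gamma (s + 1)"
proof -
  define k where "k u = \<sigma> powr s * (u powr (s + 1 - 1) / exp u)" for u
  have hi: "(k has_integral (\<sigma> powr s * Gamma (s + 1))) {0<..}"
    unfolding k_def by (intro has_integral_mult_right Gamma_int_open) (use s in simp)
  have img: "(\<lambda>y. exp y / \<sigma>) ` UNIV = {0<..}"
  proof -
    have "u \<in> (\<lambda>y. exp y / \<sigma>) ` UNIV" if "u > 0" for u
      using that \<sigma> by (intro image_eqI[of _ _ "ln (u * \<sigma>)"]) auto
    then show ?thesis using \<sigma> by auto
  qed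
  have kabs: "k absolutely_integrable_on ((\<lambda>y. exp y / \<sigma>) ` UNIV)"
    unfolding img using hi \<sigma> by (intro nonnegative_absolutely_integrable_1) (auto simp: k_def)
  have kint: "integral ((\<lambda>y. exp y / \<sigma>) ` UNIV) k = \<sigma> powr s * Gamma (s + 1)"
    unfolding img using hi by (rule integral_unique)
  have cv: "(\<lambda>x. \<bar>exp x / \<sigma>\<bar> * k (exp x / \<sigma>)) absolutely_integrable_on UNIV \<and>
       integral UNIV (\<lambda>x. \<bar>exp x / \<sigma>\<bar> * k (exp x / \<sigma>)) = \<sigma> powr s * Gamma (s + 1)"
    by (rule has_absolute_integral_change_of_variables_1'[of UNIV "\<lambda>y. exp y / \<sigma>" "\<lambda>y. exp y / \<sigma>" k, THEN iffD2])
       (use kabs kint \<sigma> in \<open>auto intro!: derivative_eq_intros inj_onI\<close>)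
  have eq: "\<bar>exp x / \<sigma>\<bar> * k (exp x / \<sigma>) = exp (s * x) * exgpd_density \<sigma> 0 x" for x
  proof -
    have "(exp x / \<sigma>) powr s = exp (s * x) / \<sigma> powr s"
      using \<sigma> by (simp add: powr_def ln_div exp_diff[symmetric] algebra_simps)
    moreover have "exp (x - exp x / \<sigma>) = exp x / exp (exp x / \<sigma>)" by (rule exp_diff)
    moreover have "\<sigma> powr s > 0" using \<sigma> by simp
    ultimately show ?thesis using \<sigma>
      by (simp add: k_def exgpd_density_def mult.commute)
  qed
  show ?thesis using cv unfolding eq .
qed

lemma mellin_neg:
  assumes \<sigma>: "\<sigma> > 0" and s: "s > -1" and \<xi>: "\<xi> < 0"
  shows "(\<lambda>y. exp (s * y) * exgpd_density \<sigma> \<xi> y) absolutely_integrable_on UNIV \<and>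
         integral UNIV (\<lambda>y. exp (s * y) * exgpd_density \<sigma> \<xi> y) =
           (-1/\<xi>) * (\<sigma> * (-1/\<xi>)) powr s * Beta (s + 1) (-1/\<xi>)"
proof -
  define b where "b = -1/\<xi>"
  define c where "c = -\<xi>/\<sigma>"
  have b: "b > 0" and c: "c > 0" using \<xi> \<sigma> by (auto simp: b_def c_def field_simps)
  have sbc: "\<sigma> * b * c = 1" using \<xi> \<sigma> by (simp add: b_def c_def field_simps)
  define S where "S = {y. c * exp y < 1}"
  define R where "R = b * (\<sigma> * b) powr s * Beta (s + 1) b"
  define k where "k u = b * (\<sigma> * b) powr s * (u powr (s + 1 - 1) * (1 - u) powr (b - 1))" for u
  have hi: "(k has_integral R) {0<..<1}"
    unfolding k_def R_def by (intro has_integral_mult_right Beta_int_open) (use s b in simp_all)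
  have img: "(\<lambda>y. c * exp y) ` S = {0<..<1}"
  proof -
    have "u \<in> (\<lambda>y. c * exp y) ` S" if "0 < u" "u < 1" for u
      using that c by (intro image_eqI[of _ _ "ln (u / c)"]) (auto simp: S_def)
    then show ?thesis using c by (auto simp: S_def)
  qed
  have "open S" unfolding S_def by (intro open_Collect_less continuous_intros)
  then have Sm: "S \<in> sets lebesgue" by (metis borel_open sets_completionI_sets sets_lborel)
  have kabs: "k absolutely_integrable_on ((\<lambda>y. c * exp y) ` S)"
    unfolding img using hi b by (intro nonnegative_absolutely_integrable_1) (auto simp: k_def)
  have kint: "integral ((\<lambda>y. c * exp y) ` S) k = R"
    unfolding img using hi by (rule integral_unique)
  have cv: "(\<lambda>x. \<bar>c * exp x\<bar> * k (c * exp x)) absolutely_integrable_on S \<and>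
       integral S (\<lambda>x. \<bar>c * exp x\<bar> * k (c * exp x)) = R"
    by (rule has_absolute_integral_change_of_variables_1'[of S "\<lambda>y. c * exp y" "\<lambda>y. c * exp y" k, THEN iffD2])
       (use kabs kint c Sm in \<open>auto intro!: derivative_eq_intros inj_onI\<close>)
  have eq: "exp (s * x) * exgpd_density \<sigma> \<xi> x = (if x \<in> S then \<bar>c * exp x\<bar> * k (c * exp x) else 0)" for x
  proof -
    have e1: "1 + \<xi> * exp x / \<sigma> = 1 - c * exp x" using \<sigma> by (simp add: c_def field_simps)
    have e2: "- 1 / \<xi> - 1 = b - 1" by (simp add: b_def)
    have e3: "(\<sigma> * b) powr s * (c * exp x) powr s = exp (s * x)"
    proof -
      have "(\<sigma> * b) powr s * (c * exp x) powr s = (\<sigma> * b * c * exp x) powr s"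
        using \<sigma> b c by (simp add: powr_mult mult.assoc)
      also have "\<dots> = exp (s * x)" using sbc by (simp add: powr_def)
      finally show ?thesis .
    qed
    have e4: "c * b = 1 / \<sigma>" using sbc \<sigma> by (simp add: field_simps)
    show ?thesis
    proof (cases "x \<in> S")
      case True
      then have "1 - c * exp x > 0" by (simp add: S_def)
      then have "exp (s * x) * exgpd_density \<sigma> \<xi> x = exp (s * x) * (exp x / \<sigma> * (1 - c * exp x) powr (b - 1))"
        using \<xi> by (simp add: exgpd_density_def e1 b_def)
      also have "\<dots> = (c * b) * exp x * ((\<sigma> * b) powr s * (c * exp x) powr s) * (1 - c * exp x) powr (b - 1)"
        unfolding e3 e4 by simp
      also have "\<dots> = \<bar>c * exp x\<bar> * k (c * exp x)"
        using c by (simp add: k_def algebra_simps)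
      finally show ?thesis using True by simp
    next
      case False
      then have "\<not> (1 + \<xi> * exp x / \<sigma> > 0)" by (simp add: S_def e1)
      then show ?thesis using False \<xi> by (simp add: exgpd_density_def)
    qed
  qed
  show ?thesis
    unfolding eq absolutely_integrable_restrict_UNIV integral_restrict_UNIV
    using cv by (simp add: R_def b_def)
qed

lemma mellin_pos:
  assumes \<sigma>: "\<sigma> > 0" and s: "s > -1" and \<xi>: "\<xi> > 0" and sa: "s < 1/\<xi>"
  shows "(\<lambda>y. exp (s * y) * exgpd_density \<sigma> \<xi> y) absolutely_integrable_on UNIV \<and>
         integral UNIV (\<lambda>y. exp (s * y) * exgpd_density \<sigma> \<xi> y) =
           (1/\<xi>) * (\<sigma> * (1/\<xi>)) powr s * Beta (s + 1) (1/\<xi> - s)"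
proof -
  define a where "a = 1/\<xi>"
  define c where "c = \<xi>/\<sigma>"
  have a: "a > 0" and c: "c > 0" using \<xi> \<sigma> by (auto simp: a_def c_def)
  have sac: "\<sigma> * a * c = 1" using \<xi> \<sigma> by (simp add: a_def c_def field_simps)
  have sa': "s < a" using sa by (simp add: a_def)
  define R where "R = a * (\<sigma> * a) powr s * Beta (s + 1) (a - s)"
  define k where "k v = a * (\<sigma> * a) powr s * (v powr (s + 1 - 1) * (1 - v) powr ((a - s) - 1))" for v
  define g where "g y = c * exp y / (1 + c * exp y)" for y
  define g' where "g' y = c * exp y / (1 + c * exp y)^2" for y
  have hi: "(k has_integral R) {0<..<1}"
    unfolding k_def R_def by (intro has_integral_mult_right Beta_int_open) (use s sa' in simp_all)
  have img: "g ` UNIV = {0<..<1}"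
  proof -
    have "v \<in> g ` UNIV" if "0 < v" "v < 1" for v
    proof (rule image_eqI[of _ _ "ln (v / ((1 - v) * c))"])
      have "c * exp (ln (v / ((1 - v) * c))) = v / (1 - v)" using that c by simp
      then have "g (ln (v / ((1 - v) * c))) = (v / (1 - v)) / (1 + v / (1 - v))"
        unfolding g_def by simp
      moreover have "(v / (1 - v)) / (1 + v / (1 - v)) = v" using that by (simp add: field_simps)
      ultimately show "v = g (ln (v / ((1 - v) * c)))" by simp
    qed simp
    moreover have "g y \<in> {0<..<1}" for y using c by (auto simp: g_def field_simps add_pos_pos)
    ultimately show ?thesis by auto
  qed
  have cp: "1 + c * exp y > 0" for y using c by (simp add: add_pos_pos)
  have der: "(g has_real_derivative g' y) (at y within UNIV)" for y
    unfolding g_def[abs_def] g'_def using c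
    by (auto intro!: derivative_eq_intros simp: field_simps power2_eq_square cp[THEN less_imp_neq, THEN not_sym])
  have mono: "strict_mono g"
  proof (rule strict_monoI)
    fix x y :: real assume "x < y"
    then have "c * exp x < c * exp y" using c by simp
    then show "g x < g y" unfolding g_def using c
      by (simp add: field_simps add_pos_pos)
  qed
  have kabs: "k absolutely_integrable_on (g ` UNIV)"
    unfolding img using hi a by (intro nonnegative_absolutely_integrable_1) (auto simp: k_def)
  have kint: "integral (g ` UNIV) k = R"
    unfolding img using hi by (rule integral_unique)
  have cv: "(\<lambda>x. \<bar>g' x\<bar> * k (g x)) absolutely_integrable_on UNIV \<and>
       integral UNIV (\<lambda>x. \<bar>g' x\<bar> * k (g x)) = R"
    by (rule has_absolute_integral_change_of_variables_1'[of UNIV g g' k, THEN iffD2])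
       (use kabs kint der strict_mono_on_imp_inj_on[OF mono] in auto)
  have eq: "\<bar>g' x\<bar> * k (g x) = exp (s * x) * exgpd_density \<sigma> \<xi> x" for x
  proof -
    define u where "u = c * exp x"
    have u: "u > 0" using c by (simp add: u_def)
    have e1: "1 + \<xi> * exp x / \<sigma> = 1 + u" using \<sigma> by (simp add: u_def c_def field_simps)
    have f1: "(\<sigma> * a) powr s * u powr s = exp (s * x)"
    proof -
      have "(\<sigma> * a) powr s * u powr s = (\<sigma> * a * c * exp x) powr s"
        using \<sigma> a c by (simp add: powr_mult mult.assoc u_def)
      also have "\<dots> = exp (s * x)" using sac by (simp add: powr_def)
      finally show ?thesis .
    qed
    have f2: "g x = u / (1 + u)" by (simp add: g_def u_def)
    have f3: "1 - u / (1 + u) = 1 / (1 + u)" using u by (simp add: field_simps)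
    have f4: "(1 + u) powr (- a - 1) * ((1 + u)^2 * (1 + u) powr s * (1 + u) powr (a - s - 1)) = 1"
    proof -
      have "(1 + u)^2 = (1 + u) powr 2" using u by (simp add: powr_realpow)
      then have "(1 + u) powr (- a - 1) * ((1 + u)^2 * (1 + u) powr s * (1 + u) powr (a - s - 1))
          = (1 + u) powr ((- a - 1) + (2 + (s + (a - s - 1))))"
        by (simp only: powr_add mult.assoc)
      also have "(- a - 1) + (2 + (s + (a - s - 1))) = 0" by simp
      also have "(1 + u) powr 0 = 1" using u by simp
      finally show ?thesis .
    qed
    have g'x: "\<bar>g' x\<bar> = u / (1 + u)^2" using u by (simp add: g'_def u_def)
    have dens: "exgpd_density \<sigma> \<xi> x = exp x / \<sigma> * (1 + u) powr (- a - 1)"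
      using \<xi> u by (simp add: exgpd_density_def e1 a_def)
    have "\<bar>g' x\<bar> * k (g x) = u / (1 + u)^2 * a * (\<sigma> * a) powr s * ((u / (1 + u)) powr s * (1 / (1 + u)) powr (a - s - 1))"
      by (simp add: g'x f2 f3 k_def)
    also have "\<dots> = (a * u) * ((\<sigma> * a) powr s * u powr s) / ((1 + u)^2 * (1 + u) powr s * (1 + u) powr (a - s - 1))"
      using u by (simp add: powr_divide field_simps)
    also have "\<dots> = (a * u) * exp (s * x) * (1 + u) powr (- a - 1)"
      unfolding f1 using f4 u by (simp add: field_simps)
    also have "a * u = exp x / \<sigma>" using sac \<sigma> by (simp add: u_def field_simps)
    finally show ?thesis by (simp add: dens)
  qed
  show ?thesis using cv unfolding eq by (simp add: R_def a_def)
qed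

lemma exp_abs_bounds:
  fixes y d :: real
  assumes d: "d > 0"
  shows "\<bar>y\<bar> \<le> exp (d * \<bar>y\<bar>) / d" "y^2 \<le> 4 * exp (d * \<bar>y\<bar>) / d^2"
proof -
  have "d * \<bar>y\<bar> \<le> exp (d * \<bar>y\<bar>)" using exp_ge_add_one_self[of "d * \<bar>y\<bar>"] by linarith
  then show "\<bar>y\<bar> \<le> exp (d * \<bar>y\<bar>) / d" using d by (simp add: field_simps)
  have h: "d * \<bar>y\<bar> / 2 \<le> exp (d * \<bar>y\<bar> / 2)" using exp_ge_add_one_self[of "d * \<bar>y\<bar> / 2"] by linarith
  have "(d * \<bar>y\<bar> / 2)^2 \<le> (exp (d * \<bar>y\<bar> / 2))^2"
    using h d by (intro power_mono) auto
  also have "(exp (d * \<bar>y\<bar> / 2))^2 = exp (d * \<bar>y\<bar>)"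
    by (simp add: power2_eq_square flip: exp_add)
  finally show "y^2 \<le> 4 * exp (d * \<bar>y\<bar>) / d^2" using d
    by (simp add: field_simps power2_eq_square)
qed

lemma exp_abs_le: "exp (d * \<bar>y\<bar>) \<le> exp (d * y) + exp (- d * y)" for d y :: real
  by (cases "y \<ge> 0") (auto simp: add_increasing add_increasing2)

lemma moments_from_mgf:
  fixes f K K1 K2 :: "real \<Rightarrow> real" and d :: real
  assumes d: "d > 0"
    and fnn: "\<And>y. f y \<ge> 0"
    and fm: "f \<in> borel_measurable borel"
    and int0: "\<And>s. \<bar>s\<bar> \<le> 2 * d \<Longrightarrow> integrable lborel (\<lambda>y. exp (s * y) * f y)"
    and closed: "\<And>s. \<bar>s\<bar> < d \<Longrightarrow> (\<integral>y. exp (s * y) * f y \<partial>lborel) = exp (K s)"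
    and dK: "\<And>s. \<bar>s\<bar> < d \<Longrightarrow> (K has_real_derivative K1 s) (at s)"
    and dK1: "\<And>s. \<bar>s\<bar> < d \<Longrightarrow> (K1 has_real_derivative K2 s) (at s)"
    and one: "(\<integral>y. f y \<partial>lborel) = 1"
  shows "integrable lborel (\<lambda>y. f y * y)" "integrable lborel (\<lambda>y. f y * y^2)"
        "(\<integral>y. f y * y \<partial>lborel) = K1 0" "(\<integral>y. f y * y^2 \<partial>lborel) = (K1 0)^2 + K2 0"
proof -
  define F0 where "F0 s y = exp (s * y) * f y" for s y
  define F1 where "F1 s y = y * exp (s * y) * f y" for s y
  define F2 where "F2 s y = y^2 * exp (s * y) * f y" for s y
  define C where "C = 4 / d^2 + 1 / d"
  define H where "H y = C * (F0 (2 * d) y + F0 (- 2 * d) y)" for y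
  have C: "C > 0" unfolding C_def using d by (intro add_pos_pos divide_pos_pos) auto
  have [measurable]: "f \<in> borel_measurable lborel" using fm by simp
  have intH: "integrable lborel H"
    unfolding H_def F0_def using int0[of "2 * d"] int0[of "- 2 * d"] d by auto
  have key: "\<bar>y\<bar>^k * exp (s * y) \<le> C * (exp (2 * d * y) + exp (- 2 * d * y))"
    if "\<bar>s\<bar> < d" "k = 1 \<or> k = 2" for s y and k :: nat
  proof -
    have e1: "exp (s * y) \<le> exp (d * \<bar>y\<bar>)"
    proof -
      have "s * y \<le> \<bar>s\<bar> * \<bar>y\<bar>" by (metis abs_ge_self abs_mult)
      also have "\<dots> \<le> d * \<bar>y\<bar>" using that by (intro mult_right_mono) auto
      finally show ?thesis by simp
    qed
    have e2: "\<bar>y\<bar>^k \<le> C * exp (d * \<bar>y\<bar>)"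
    proof -
      have b1: "\<bar>y\<bar> \<le> exp (d * \<bar>y\<bar>) / d" and b2: "y^2 \<le> 4 * exp (d * \<bar>y\<bar>) / d^2"
        using exp_abs_bounds[OF d] by auto
      have p: "exp (d * \<bar>y\<bar>) > 0" by simp
      have c1: "exp (d * \<bar>y\<bar>) / d \<le> C * exp (d * \<bar>y\<bar>)"
        unfolding C_def using p d by (simp add: field_simps)
      have c2: "4 * exp (d * \<bar>y\<bar>) / d^2 \<le> C * exp (d * \<bar>y\<bar>)"
        unfolding C_def using p d by (simp add: field_simps)
      show ?thesis using that(2) b1 b2 c1 c2 by (auto simp: power2_eq_square)
    qed
    have "\<bar>y\<bar>^k * exp (s * y) \<le> C * exp (d * \<bar>y\<bar>) * exp (d * \<bar>y\<bar>)"
      using e1 e2 C by (intro mult_mono) auto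
    also have "\<dots> = C * exp ((2 * d) * \<bar>y\<bar>)" by (simp flip: exp_add)
    also have "\<dots> \<le> C * (exp (2 * d * y) + exp (- 2 * d * y))"
      using C exp_abs_le[of "2 * d" y] by (intro mult_left_mono) auto
    finally show ?thesis .
  qed
  have Hnn: "H y \<ge> 0" for y unfolding H_def F0_def using C fnn by simp
  have bnd1: "\<bar>F1 s y\<bar> \<le> H y" if "\<bar>s\<bar> < d" for s y
  proof -
    have "\<bar>F1 s y\<bar> = (\<bar>y\<bar>^1 * exp (s * y)) * f y" using fnn[of y] by (simp add: F1_def abs_mult)
    also have "\<dots> \<le> C * (exp (2 * d * y) + exp (- 2 * d * y)) * f y"
      using key[OF that, of 1 y] fnn[of y] by (intro mult_right_mono) auto
    also have "\<dots> = H y" by (simp add: H_def F0_def algebra_simps)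
    finally show ?thesis .
  qed
  have bnd2: "\<bar>F2 s y\<bar> \<le> H y" if "\<bar>s\<bar> < d" for s y
  proof -
    have "\<bar>F2 s y\<bar> = (\<bar>y\<bar>^2 * exp (s * y)) * f y" using fnn[of y] by (simp add: F2_def abs_mult)
    also have "\<dots> \<le> C * (exp (2 * d * y) + exp (- 2 * d * y)) * f y"
      using key[OF that, of 2 y] fnn[of y] by (intro mult_right_mono) auto
    also have "\<dots> = H y" by (simp add: H_def F0_def algebra_simps)
    finally show ?thesis .
  qed
  have mF1: "F1 s \<in> borel_measurable borel" for s
    unfolding F1_def[abs_def] using fm by measurable
  have mF2: "F2 s \<in> borel_measurable borel" for s
    unfolding F2_def[abs_def] using fm by measurable
  have intF0: "integrable lborel (F0 s)" if "\<bar>s\<bar> < d" for s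
    unfolding F0_def using int0[of s] that d by simp
  have intF1: "integrable lborel (F1 s)" if "\<bar>s\<bar> < d" for s
    by (rule Bochner_Integration.integrable_bound[OF intH])
       (use bnd1[OF that] Hnn mF1 in auto)
  have intF2: "integrable lborel (F2 s)" if "\<bar>s\<bar> < d" for s
    by (rule Bochner_Integration.integrable_bound[OF intH])
       (use bnd2[OF that] Hnn mF2 in auto)
  have inI: "s \<in> {-d<..<d} \<longleftrightarrow> \<bar>s\<bar> < d" for s by auto
  have D0: "((\<lambda>s. \<integral>y. F0 s y \<partial>lborel) has_real_derivative (\<integral>y. F1 s y \<partial>lborel)) (at s)"
    if "\<bar>s\<bar> < d" for s
  proof (rule deriv_integral[where a="-d" and b=d and H=H])
    show "((\<lambda>s. F0 s y) has_real_derivative F1 s' y) (at s')" for s' y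
      unfolding F0_def F1_def by (auto intro!: derivative_eq_intros)
  qed (use that intF0 intH bnd1 mF1 in auto)
  have D1: "((\<lambda>s. \<integral>y. F1 s y \<partial>lborel) has_real_derivative (\<integral>y. F2 0 y \<partial>lborel)) (at 0)"
  proof (rule deriv_integral[where a="-d" and b=d and H=H])
    show "((\<lambda>s. F1 s y) has_real_derivative F2 s' y) (at s')" for s' y
      unfolding F1_def F2_def by (auto intro!: derivative_eq_intros simp: power2_eq_square)
  qed (use d intF1 intH bnd2 mF2 in auto)
  have N1: "(\<integral>y. F1 s y \<partial>lborel) = exp (K s) * K1 s" if "\<bar>s\<bar> < d" for s
  proof -
    have "((\<lambda>s. exp (K s)) has_real_derivative (\<integral>y. F1 s y \<partial>lborel)) (at s)"
    proof (rule has_field_derivative_transform_within_open[OF D0[OF that], of "{-d<..<d}"])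
      show "(\<integral>y. F0 x y \<partial>lborel) = exp (K x)" if "x \<in> {-d<..<d}" for x
        using closed[of x] that unfolding F0_def by auto
    qed (use that in auto)
    moreover have "((\<lambda>s. exp (K s)) has_real_derivative exp (K s) * K1 s) (at s)"
      using dK[OF that] by (auto intro!: derivative_eq_intros)
    ultimately show ?thesis by (rule DERIV_unique)
  qed
  have "((\<lambda>s. exp (K s) * K1 s) has_real_derivative (\<integral>y. F2 0 y \<partial>lborel)) (at 0)"
  proof (rule has_field_derivative_transform_within_open[OF D1, of "{-d<..<d}"])
    show "(\<integral>y. F1 x y \<partial>lborel) = exp (K x) * K1 x" if "x \<in> {-d<..<d}" for x
      using N1[of x] that by auto
  qed (use d in auto)
  moreover have "((\<lambda>s. exp (K s) * K1 s) has_real_derivative exp (K 0) * K1 0 * K1 0 + exp (K 0) * K2 0) (at 0)"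
    using dK[of 0] dK1[of 0] d by (auto intro!: derivative_eq_intros)
  ultimately have N2: "(\<integral>y. F2 0 y \<partial>lborel) = exp (K 0) * K1 0 * K1 0 + exp (K 0) * K2 0"
    by (rule DERIV_unique)
  have eK0: "exp (K 0) = 1" using closed[of 0] d one by simp
  have e1: "F1 0 = (\<lambda>y. f y * y)" by (auto simp: F1_def)
  have e2: "F2 0 = (\<lambda>y. f y * y^2)" by (auto simp: F2_def)
  show "integrable lborel (\<lambda>y. f y * y)" using intF1[of 0] d e1 by simp
  show "integrable lborel (\<lambda>y. f y * y^2)" using intF2[of 0] d e2 by simp
  show "(\<integral>y. f y * y \<partial>lborel) = K1 0" using N1[of 0] d e1 eK0 by simp
  show "(\<integral>y. f y * y^2 \<partial>lborel) = (K1 0)^2 + K2 0" using N2 e2 eK0 by (simp add: power2_eq_square)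
qed

lemma abs_to_lborel:
  fixes g :: "real \<Rightarrow> real"
  assumes "g absolutely_integrable_on UNIV" "integral UNIV g = I" "g \<in> borel_measurable borel"
  shows "integrable lborel g" "(\<integral>y. g y \<partial>lborel) = I"
proof -
  have il: "integrable lebesgue g" using assms(1) by (simp add: set_integrable_def)
  have gm: "g \<in> borel_measurable lborel" using assms(3) by simp
  then show "integrable lborel g" using il integrable_completion[OF gm] by simp
  have "(LINT x:UNIV|lebesgue. g x) = integral UNIV g"
    by (rule set_lebesgue_integral_eq_integral(2)) (use assms(1) in simp)
  then have "(\<integral>x. g x \<partial>lebesgue) = I" using assms(2) by (simp add: set_lebesgue_integral_def)
  then show "(\<integral>y. g y \<partial>lborel) = I" using integral_completion[OF gm] by simp
qed

lemma exgpd_measurable: "exgpd_density \<sigma> \<xi> \<in> borel_measurable borel"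
  unfolding exgpd_density_def[abs_def] by measurable

lemma exgpd_nonneg: "\<sigma> > 0 \<Longrightarrow> exgpd_density \<sigma> \<xi> y \<ge> 0"
  unfolding exgpd_density_def by auto

definition Kf :: "real \<Rightarrow> real \<Rightarrow> real \<Rightarrow> real" where
  "Kf \<sigma> \<xi> s = (if \<xi> = 0 then s * ln \<sigma> + ln_Gamma (s + 1)
     else if \<xi> < 0 then ln (-1/\<xi>) + s * ln (\<sigma> * (-1/\<xi>)) + ln_Gamma (s + 1) + ln_Gamma (-1/\<xi>) - ln_Gamma (s + 1 + (-1/\<xi>))
     else ln (1/\<xi>) + s * ln (\<sigma> * (1/\<xi>)) + ln_Gamma (s + 1) + ln_Gamma (1/\<xi> - s) - ln_Gamma (1/\<xi> + 1))"

definition K1f :: "real \<Rightarrow> real \<Rightarrow> real \<Rightarrow> real" where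
  "K1f \<sigma> \<xi> s = (if \<xi> = 0 then ln \<sigma> + Digamma (s + 1)
     else if \<xi> < 0 then ln (\<sigma> * (-1/\<xi>)) + Digamma (s + 1) - Digamma (s + 1 + (-1/\<xi>))
     else ln (\<sigma> * (1/\<xi>)) + Digamma (s + 1) - Digamma (1/\<xi> - s))"

definition K2f :: "real \<Rightarrow> real \<Rightarrow> real" where
  "K2f \<xi> s = (if \<xi> = 0 then Polygamma 1 (s + 1)
     else if \<xi> < 0 then Polygamma 1 (s + 1) - Polygamma 1 (s + 1 + (-1/\<xi>))
     else Polygamma 1 (s + 1) + Polygamma 1 (1/\<xi> - s))"

lemma not_nonpos_pos: "(x::real) > 0 \<Longrightarrow> x \<notin> \<int>\<^sub>\<le>\<^sub>0"
  by (auto elim!: nonpos_Ints_cases)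

lemma exgpd_moments:
  assumes \<sigma>: "\<sigma> > 0" and one: "(\<integral>y. exgpd_density \<sigma> \<xi> y \<partial>lborel) = 1"
  shows "integrable lborel (\<lambda>y. exgpd_density \<sigma> \<xi> y * y)"
        "integrable lborel (\<lambda>y. exgpd_density \<sigma> \<xi> y * y^2)"
        "(\<integral>y. exgpd_density \<sigma> \<xi> y * y \<partial>lborel) = K1f \<sigma> \<xi> 0"
        "(\<integral>y. exgpd_density \<sigma> \<xi> y * y^2 \<partial>lborel) = (K1f \<sigma> \<xi> 0)^2 + K2f \<xi> 0"
proof -
  define d where "d = 1 / (4 * (1 + \<bar>\<xi>\<bar>))"
  have d: "d > 0" by (simp add: d_def add_pos_nonneg)
  have inJ: "s > -1 \<and> (\<xi> > 0 \<longrightarrow> s < 1/\<xi>)" if "\<bar>s\<bar> \<le> 2 * d" for s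
  proof -
    have "2 * d \<le> 1/2" unfolding d_def by (simp add: field_simps)
    then have s1: "\<bar>s\<bar> \<le> 1/2" using that by linarith
    have "s < 1/\<xi>" if "\<xi> > 0"
    proof -
      have "2 * d < 1/\<xi>" unfolding d_def using that by (simp add: field_simps)
      then show ?thesis using \<open>\<bar>s\<bar> \<le> 2 * d\<close> by linarith
    qed
    then show ?thesis using s1 by auto
  qed
  define R where "R s = integral UNIV (\<lambda>y. exp (s * y) * exgpd_density \<sigma> \<xi> y)" for s
  have mel: "(\<lambda>y. exp (s * y) * exgpd_density \<sigma> \<xi> y) absolutely_integrable_on UNIV \<and>
          R s = exp (Kf \<sigma> \<xi> s)" if "\<bar>s\<bar> \<le> 2 * d" for s
  proof -
    have s1: "s > -1" and s2: "\<xi> > 0 \<Longrightarrow> s < 1/\<xi>" using inJ[OF that] by auto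
    show ?thesis
    proof (cases "\<xi> = 0")
      case True
      have "\<sigma> powr s * Gamma (s + 1) = exp (Kf \<sigma> \<xi> s)"
        using True \<sigma> s1 by (simp add: Kf_def powr_def Gamma_real_pos_exp exp_add)
      then show ?thesis using mellin0[OF \<sigma> s1] True by (simp add: R_def)
    next
      case False
      show ?thesis
      proof (cases "\<xi> < 0")
        case True
        define b where "b = -1/\<xi>"
        have b: "b > 0" using True by (simp add: b_def)
        have KK: "Kf \<sigma> \<xi> s = ln b + s * ln (\<sigma> * b) + ln_Gamma (s + 1) + ln_Gamma b - ln_Gamma (s + 1 + b)"
          using True by (simp add: Kf_def b_def)
        have "b * (\<sigma> * b) powr s * Beta (s + 1) b = exp (Kf \<sigma> \<xi> s)"
          unfolding KK using \<sigma> s1 b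
          by (simp add: powr_def Gamma_real_pos_exp exp_add exp_diff Beta_def)
        then show ?thesis using mellin_neg[OF \<sigma> s1 True] by (simp add: R_def b_def)
      next
        case False2: False
        then have pos: "\<xi> > 0" using False by linarith
        define a where "a = 1/\<xi>"
        have a: "a > 0" using pos by (simp add: a_def)
        have sa: "s < a" using s2[OF pos] by (simp add: a_def)
        have KK: "Kf \<sigma> \<xi> s = ln a + s * ln (\<sigma> * a) + ln_Gamma (s + 1) + ln_Gamma (a - s) - ln_Gamma (a + 1)"
          using pos by (simp add: Kf_def a_def)
        have "a * (\<sigma> * a) powr s * Beta (s + 1) (a - s) = exp (Kf \<sigma> \<xi> s)"
          unfolding KK using \<sigma> s1 a sa
          by (simp add: powr_def Gamma_real_pos_exp exp_add exp_diff Beta_def add.commute)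
        then show ?thesis using mellin_pos[OF \<sigma> s1 pos s2[OF pos]] by (simp add: R_def a_def)
      qed
    qed
  qed
  have mF: "(\<lambda>y. exp (s * y) * exgpd_density \<sigma> \<xi> y) \<in> borel_measurable borel" for s
    using exgpd_measurable by measurable
  note conv = abs_to_lborel[OF conjunct1[OF mel] _ mF]
  have dK: "(Kf \<sigma> \<xi> has_real_derivative K1f \<sigma> \<xi> s) (at s)"
    and dK1: "(K1f \<sigma> \<xi> has_real_derivative K2f \<xi> s) (at s)" if "\<bar>s\<bar> < d" for s
  proof -
    have s1: "s > -1" and s2: "\<xi> > 0 \<Longrightarrow> s < 1/\<xi>" using inJ[of s] that d by auto
    have "(Kf \<sigma> \<xi> has_real_derivative K1f \<sigma> \<xi> s) (at s) \<and> (K1f \<sigma> \<xi> has_real_derivative K2f \<xi> s) (at s)"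
    proof (cases "\<xi> = 0")
      case True
      then show ?thesis using s1 unfolding Kf_def[abs_def] K1f_def[abs_def] K2f_def
        by (auto intro!: derivative_eq_intros not_nonpos_pos)
    next
      case False
      show ?thesis
      proof (cases "\<xi> < 0")
        case True
        have b: "-1/\<xi> > 0" using True by simp
        have "1/\<xi> < 0" using True by simp
        then have b2: "1/\<xi> < s + 1" using s1 by linarith
        show ?thesis using s1 True b b2 unfolding Kf_def[abs_def] K1f_def[abs_def] K2f_def
          by (auto intro!: derivative_eq_intros not_nonpos_pos)
      next
        case False2: False
        then have pos: "\<xi> > 0" using False by linarith
        have sa: "1/\<xi> - s > 0" using s2[OF pos] by simp
        show ?thesis using s1 pos sa False unfolding Kf_def[abs_def] K1f_def[abs_def] K2f_def
          by (auto intro!: derivative_eq_intros not_nonpos_pos)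
      qed
    qed
    then show "(Kf \<sigma> \<xi> has_real_derivative K1f \<sigma> \<xi> s) (at s)"
      "(K1f \<sigma> \<xi> has_real_derivative K2f \<xi> s) (at s)" by auto
  qed
  have i0: "integrable lborel (\<lambda>y. exp (s * y) * exgpd_density \<sigma> \<xi> y)" if "\<bar>s\<bar> \<le> 2 * d" for s
    using conv(1)[OF that refl] .
  have c0: "(\<integral>y. exp (s * y) * exgpd_density \<sigma> \<xi> y \<partial>lborel) = exp (Kf \<sigma> \<xi> s)" if "\<bar>s\<bar> < d" for s
  proof -
    have s2: "\<bar>s\<bar> \<le> 2 * d" using that d by linarith
    show ?thesis using conv(2)[OF s2 refl] mel[OF s2] by (simp add: R_def)
  qed
  note MM = moments_from_mgf[OF d exgpd_nonneg[OF \<sigma>] exgpd_measurable i0 c0 dK dK1 one]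
  have "integrable lborel (\<lambda>y. exgpd_density \<sigma> \<xi> y * y) \<and>
        integrable lborel (\<lambda>y. exgpd_density \<sigma> \<xi> y * y^2) \<and>
        (\<integral>y. exgpd_density \<sigma> \<xi> y * y \<partial>lborel) = K1f \<sigma> \<xi> 0 \<and>
        (\<integral>y. exgpd_density \<sigma> \<xi> y * y^2 \<partial>lborel) = (K1f \<sigma> \<xi> 0)^2 + K2f \<xi> 0"
    using MM by blast
  then show "integrable lborel (\<lambda>y. exgpd_density \<sigma> \<xi> y * y)"
        "integrable lborel (\<lambda>y. exgpd_density \<sigma> \<xi> y * y^2)"
        "(\<integral>y. exgpd_density \<sigma> \<xi> y * y \<partial>lborel) = K1f \<sigma> \<xi> 0"
        "(\<integral>y. exgpd_density \<sigma> \<xi> y * y^2 \<partial>lborel) = (K1f \<sigma> \<xi> 0)^2 + K2f \<xi> 0" by auto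
qed

lemma trigamma_sums:
  assumes "x > 0"
  shows "(\<lambda>k. inverse ((x + real k)^2)) sums trigamma x"
  using Polygamma_LIMSEQ[of x 1] assms unfolding trigamma_def
  by (simp add: eval_nat_numeral)

lemma trigamma_pos: "x > 0 \<Longrightarrow> trigamma x > 0"
  unfolding trigamma_def by (intro Polygamma_real_odd_pos not_nonpos_pos) auto

lemma trigamma_1: "trigamma 1 = pi\<^sup>2 / 6"
proof -
  have "(\<lambda>k. inverse ((1 + real k)^2)) sums trigamma 1" using trigamma_sums[of 1] by simp
  moreover have "(\<lambda>k. inverse ((1 + real k)^2)) sums (pi\<^sup>2 / 6)"
    using inverse_squares_sums by (simp add: inverse_eq_divide add.commute)
  ultimately show ?thesis using sums_unique2 by blast
qed

theorem mainTheorem5: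
  fixes M :: "'a measure" and Y :: "'a \<Rightarrow> real" and \<sigma> \<xi> :: real
  assumes "prob_space M"
    and "\<sigma> > 0"
    and "distributed M lborel Y (\<lambda>y. ennreal (exgpd_density \<sigma> \<xi> y))"
  shows "integrable M (\<lambda>x. (Y x)\<^sup>2)
    \<and> (\<xi> < 0 \<longrightarrow>
         prob_space.variance M Y = trigamma 1 - trigamma (1 - 1 / \<xi>)
       \<and> prob_space.variance M Y = pi\<^sup>2 / 6 - (\<Sum>k. 1 / (real (Suc k) - 1 / \<xi>)\<^sup>2))
    \<and> (\<xi> > 0 \<longrightarrow>
         prob_space.variance M Y = trigamma 1 + trigamma (1 / \<xi>)
       \<and> prob_space.variance M Y = pi\<^sup>2 / 6 + (\<Sum>k. 1 / (real (Suc k) + 1 / \<xi> - 1)\<^sup>2))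
    \<and> (\<xi> = 0 \<longrightarrow>
         prob_space.variance M Y = trigamma 1 \<and> prob_space.variance M Y = pi\<^sup>2 / 6)
    \<and> (\<xi> > 0 \<longrightarrow> prob_space.variance M Y > pi\<^sup>2 / 6)
    \<and> (\<xi> < 0 \<longrightarrow> prob_space.variance M Y < pi\<^sup>2 / 6)"
proof -
  interpret P: prob_space M by fact
  note distr = assms(3)
  define f where "f = exgpd_density \<sigma> \<xi>"
  have fnn: "\<And>x. 0 \<le> f x" unfolding f_def using exgpd_nonneg[OF assms(2)] by auto
  have one: "(\<integral>y. exgpd_density \<sigma> \<xi> y \<partial>lborel) = 1"
  proof -
    have "(\<integral>y. exgpd_density \<sigma> \<xi> y * 1 \<partial>lborel) = (\<integral>x. 1 \<partial>M)"
      by (rule distributed_integral[OF distr]) (use exgpd_nonneg[OF assms(2)] in auto)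
    then show ?thesis by (simp add: P.prob_space)
  qed
  note mom = exgpd_moments[OF assms(2) one]
  have EY: "P.expectation Y = K1f \<sigma> \<xi> 0" and iY: "integrable M Y"
  proof -
    have "(\<integral>y. exgpd_density \<sigma> \<xi> y * y \<partial>lborel) = (\<integral>x. Y x \<partial>M)"
      by (rule distributed_integral[OF distr, of "\<lambda>x. x", simplified]) (use exgpd_nonneg[OF assms(2)] in auto)
    then show "P.expectation Y = K1f \<sigma> \<xi> 0" using mom(3) by simp
    show "integrable M Y"
      using distributed_integrable[OF distr, of "\<lambda>x. x"] mom(1) exgpd_nonneg[OF assms(2)] by simp
  qed
  have EY2: "P.expectation (\<lambda>x. (Y x)\<^sup>2) = (K1f \<sigma> \<xi> 0)^2 + K2f \<xi> 0" and iY2: "integrable M (\<lambda>x. (Y x)\<^sup>2)"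
  proof -
    have "(\<integral>y. exgpd_density \<sigma> \<xi> y * y^2 \<partial>lborel) = (\<integral>x. (Y x)^2 \<partial>M)"
      by (rule distributed_integral[OF distr, of "\<lambda>x. x^2"]) (use exgpd_nonneg[OF assms(2)] in auto)
    then show "P.expectation (\<lambda>x. (Y x)\<^sup>2) = (K1f \<sigma> \<xi> 0)^2 + K2f \<xi> 0" using mom(4) by simp
    show "integrable M (\<lambda>x. (Y x)\<^sup>2)"
      using distributed_integrable[OF distr, of "\<lambda>x. x^2"] mom(2) exgpd_nonneg[OF assms(2)] by simp
  qed
  have V: "P.variance Y = K2f \<xi> 0"
    using P.variance_eq[OF iY iY2] EY EY2 by simp
  have V0: "\<xi> = 0 \<Longrightarrow> P.variance Y = trigamma 1" using V by (simp add: K2f_def trigamma_def)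
  have Vn: "\<xi> < 0 \<Longrightarrow> P.variance Y = trigamma 1 - trigamma (1 - 1 / \<xi>)"
    using V by (simp add: K2f_def trigamma_def add.commute)
  have Vp: "\<xi> > 0 \<Longrightarrow> P.variance Y = trigamma 1 + trigamma (1 / \<xi>)"
    using V by (simp add: K2f_def trigamma_def)
  have Sn: "(\<Sum>k. 1 / (real (Suc k) - 1 / \<xi>)\<^sup>2) = trigamma (1 - 1 / \<xi>)" if "\<xi> < 0"
  proof -
    have "1 - 1 / \<xi> > 0" using that by (simp add: field_simps)
    from trigamma_sums[OF this] show ?thesis
      by (simp add: sums_iff inverse_eq_divide algebra_simps)
  qed
  have Sp: "(\<Sum>k. 1 / (real (Suc k) + 1 / \<xi> - 1)\<^sup>2) = trigamma (1 / \<xi>)" if "\<xi> > 0"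
  proof -
    have "1 / \<xi> > 0" using that by simp
    from trigamma_sums[OF this] show ?thesis
      by (simp add: sums_iff inverse_eq_divide algebra_simps)
  qed
  have tpn: "\<xi> < 0 \<Longrightarrow> trigamma (1 - 1 / \<xi>) > 0"
    by (rule trigamma_pos) (simp add: field_simps)
  have tpp: "\<xi> > 0 \<Longrightarrow> trigamma (1 / \<xi>) > 0"
    by (rule trigamma_pos) simp
  show ?thesis
    using iY2 V0 Vn Vp Sn Sp tpn tpp trigamma_1 by auto
qed

end
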